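(* Let $M$ be a finite non-negative Borel measure on $(-1,1)$. Let $A\colon\ell^2(\mathbb Z_+)\to L^2((-1,1);dM)$ be the operator with domain $\mathcal D$ given by $(Ag)(\mu)=\sum_{n=0}^\infty g_n\mu^n$. Let $A_{\max}$ be the operator defined by $(A_{\max}g)(\mu)=\sum_{n=0}^\infty g_n\mu^n$, $\mu\in(-1,1)$, on the domain of all $g\in\ell^2(\mathbb Z_+)$ for which this function belongs to $L^2((-1,1);dM)$. Then $A$ is closable and its closure satisfies $A^{**}=A_{\max}$.
   Context: $\ell^2(\mathbb Z_+)$ is the Hilbert space of square-summable complex sequences $g=(g_0,g_1,\ldots)$, and $\mathcal D$ is the dense subspace of sequences with finitely many non-zero entries. For $g\in\ell^2(\mathbb Z_+)$ and $\mu\in(-1,1)$ the series $\sum g_n\mu^n$ converges absolutely. *)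

theory Defs
  imports "HOL-Analysis.Analysis"
begin

definition l2seq :: "(nat \<Rightarrow> complex) \<Rightarrow> bool" where
  "l2seq g \<longleftrightarrow> summable (\<lambda>n. (norm (g n))^2)"

text \<open>The dense subspace D: finitely supported sequences.\<close>
definition finsupp_seq :: "(nat \<Rightarrow> complex) \<Rightarrow> bool" where
  "finsupp_seq g \<longleftrightarrow> finite {n. g n \<noteq> 0}"

definition l2dist2 :: "(nat \<Rightarrow> complex) \<Rightarrow> (nat \<Rightarrow> complex) \<Rightarrow> real" where
  "l2dist2 g h = (\<Sum>n. (norm (g n - h n))^2)"

definition pseries :: "(nat \<Rightarrow> complex) \<Rightarrow> real \<Rightarrow> complex" where
  "pseries g \<mu> = (\<Sum>n. g n * (complex_of_real \<mu>) ^ n)"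

text \<open>Membership in L^2(M) (as a function; elements of L^2 are a.e.-classes).\<close>
definition L2fun :: "real measure \<Rightarrow> (real \<Rightarrow> complex) \<Rightarrow> bool" where
  "L2fun M f \<longleftrightarrow> f \<in> borel_measurable M \<and> integrable M (\<lambda>x. (norm (f x))^2)"

definition L2dist2 :: "real measure \<Rightarrow> (real \<Rightarrow> complex) \<Rightarrow> (real \<Rightarrow> complex) \<Rightarrow> ennreal" where
  "L2dist2 M f h = (\<integral>\<^sup>+ x. ennreal ((norm (f x - h x))^2) \<partial>M)"

definition in_graph_closure_A :: "real measure \<Rightarrow> (nat \<Rightarrow> complex) \<Rightarrow> (real \<Rightarrow> complex) \<Rightarrow> bool" where
  "in_graph_closure_A M g f \<longleftrightarrow>
     (\<exists>G :: nat \<Rightarrow> nat \<Rightarrow> complex. (\<forall>k. finsupp_seq (G k)) \<and>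
        (\<lambda>k. l2dist2 (G k) g) \<longlonglongrightarrow> 0 \<and>
        (\<lambda>k. L2dist2 M (pseries (G k)) f) \<longlonglongrightarrow> 0)"

text \<open>A is closable: the closure of its graph is the graph of an operator.\<close>
definition closable_A :: "real measure \<Rightarrow> bool" where
  "closable_A M \<longleftrightarrow>
     (\<forall>g f1 f2. l2seq g \<and> L2fun M f1 \<and> L2fun M f2 \<and>
        in_graph_closure_A M g f1 \<and> in_graph_closure_A M g f2 \<longrightarrow> (AE x in M. f1 x = f2 x))"

definition dom_Amax :: "real measure \<Rightarrow> (nat \<Rightarrow> complex) \<Rightarrow> bool" where
  "dom_Amax M g \<longleftrightarrow> l2seq g \<and> L2fun M (pseries g)"

end

theory Submission imports Defs begin

lemma cs_fin:
  fixes u v :: "'a \<Rightarrow> complex"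
  shows "(norm (\<Sum>i\<in>A. u i * v i))^2 \<le> (\<Sum>i\<in>A. (norm (u i))^2) * (\<Sum>i\<in>A. (norm (v i))^2)"
proof -
  have "norm (\<Sum>i\<in>A. u i * v i) \<le> (\<Sum>i\<in>A. \<bar>norm (u i)\<bar> * \<bar>norm (v i)\<bar>)"
    by (rule order_trans[OF norm_sum]) (simp add: norm_mult)
  also have "\<dots> \<le> L2_set (\<lambda>i. norm (u i)) A * L2_set (\<lambda>i. norm (v i)) A"
    by (rule L2_set_mult_ineq)
  finally have "(norm (\<Sum>i\<in>A. u i * v i))^2 \<le> (L2_set (\<lambda>i. norm (u i)) A * L2_set (\<lambda>i. norm (v i)) A)^2"
    by (intro power_mono) auto
  also have "\<dots> = (\<Sum>i\<in>A. (norm (u i))^2) * (\<Sum>i\<in>A. (norm (v i))^2)"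
    unfolding power_mult_distrib L2_set_def by (simp add: sum_nonneg)
  finally show ?thesis .
qed

lemma cs_card:
  fixes w :: "'a \<Rightarrow> complex"
  shows "(norm (\<Sum>i\<in>A. w i))^2 \<le> real (card A) * (\<Sum>i\<in>A. (norm (w i))^2)"
  using cs_fin[of w "\<lambda>_. 1" A] by (simp add: mult.commute)

lemma ps_cs:
  fixes d :: "nat \<Rightarrow> complex" and \<mu> :: real
  assumes sd: "summable (\<lambda>n. (norm (d n))^2)" and mu: "\<bar>\<mu>\<bar> < 1"
  shows "summable (\<lambda>n. d n * of_real \<mu> ^ n)"
    and "(norm (\<Sum>n. d n * of_real \<mu> ^ n))^2 \<le> (\<Sum>n. (norm (d n))^2) / (1 - \<mu>^2)"
proof -
  have m2: "\<mu>^2 < 1" using mu by (simp add: abs_square_less_1)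
  have g: "summable (\<lambda>n. (\<mu>^2)^n)" using m2 by (intro summable_geometric) auto
  have "norm (d n * of_real \<mu> ^ n) \<le> (norm (d n))^2 + (\<mu>^2)^n" for n
  proof -
    have "norm (d n * of_real \<mu> ^ n) = norm (d n) * \<bar>\<mu>\<bar>^n" by (simp add: norm_mult norm_power)
    also have "\<dots> \<le> (norm (d n))^2 + (\<bar>\<mu>\<bar>^n)^2"
      using sum_squares_bound[of "norm (d n)" "\<bar>\<mu>\<bar>^n"] 
        mult_nonneg_nonneg[OF norm_ge_zero[of "d n"] zero_le_power[OF abs_ge_zero[of \<mu>], of n]]
      by linarith
    also have "(\<bar>\<mu>\<bar>^n)^2 = (\<mu>^2)^n" by (simp add: power2_eq_square power_mult_distrib[symmetric])
    finally show ?thesis .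
  qed
  then show sm: "summable (\<lambda>n. d n * of_real \<mu> ^ n)"
    by (intro summable_comparison_test[OF _ summable_add[OF sd g]]) auto
  have lim: "(\<lambda>m. (norm (\<Sum>n<m. d n * of_real \<mu> ^ n))^2) \<longlonglongrightarrow> (norm (\<Sum>n. d n * of_real \<mu> ^ n))^2"
    by (intro tendsto_intros summable_LIMSEQ sm)
  show "(norm (\<Sum>n. d n * of_real \<mu> ^ n))^2 \<le> (\<Sum>n. (norm (d n))^2) / (1 - \<mu>^2)"
  proof (rule LIMSEQ_le_const2[OF lim], intro exI allI impI)
    fix m :: nat
    have "(norm (\<Sum>n<m. d n * of_real \<mu> ^ n))^2 \<le> (\<Sum>n<m. (norm (d n))^2) * (\<Sum>n<m. (norm (of_real \<mu> ^ n :: complex))^2)"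
      by (rule cs_fin)
    also have "(\<Sum>n<m. (norm (of_real \<mu> ^ n :: complex))^2) = (\<Sum>n<m. (\<mu>^2)^n)"
      by (simp add: norm_power power2_eq_square power_mult_distrib[symmetric])
    also have "\<dots> \<le> (\<Sum>n. (\<mu>^2)^n)" by (intro sum_le_suminf g) auto
    also have "\<dots> = 1 / (1 - \<mu>^2)" using m2 by (subst suminf_geometric) auto
    finally have "(norm (\<Sum>n<m. d n * of_real \<mu> ^ n))^2 \<le> (\<Sum>n<m. (norm (d n))^2) * (1 / (1 - \<mu>^2))"
      by (simp add: mult_left_mono sum_nonneg)
    also have "\<dots> \<le> (\<Sum>n. (norm (d n))^2) * (1 / (1 - \<mu>^2))"
      using m2 by (intro mult_right_mono sum_le_suminf sd) auto
    finally show "(norm (\<Sum>n<m. d n * of_real \<mu> ^ n))^2 \<le> (\<Sum>n. (norm (d n))^2) / (1 - \<mu>^2)" by simp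
  qed
qed

definition convs :: "nat \<Rightarrow> (nat \<Rightarrow> complex) \<Rightarrow> nat set \<Rightarrow> nat \<Rightarrow> complex" where
  "convs N a A n = (\<Sum>j\<in>{1..N}. \<Sum>m\<in>A. if n = m + 2*j then a m else 0)"

lemma convs_alt:
  assumes "finite A"
  shows "convs N a A n = (\<Sum>p\<in>{p\<in>{1..N}\<times>A. n = snd p + 2 * fst p}. a (snd p))"
proof -
  have "convs N a A n = (\<Sum>p\<in>{1..N}\<times>A. if n = snd p + 2 * fst p then a (snd p) else 0)"
    unfolding convs_def by (simp add: sum.cartesian_product split_def)
  also have "\<dots> = (\<Sum>p\<in>{p\<in>{1..N}\<times>A. n = snd p + 2 * fst p}. a (snd p))"
    using assms by (simp add: sum.inter_filter)
  finally show ?thesis .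
qed

lemma card_P_N: "finite (A::nat set) \<Longrightarrow> card {p\<in>{1..N}\<times>A. n = snd p + 2 * fst p} \<le> N"
proof -
  assume fA: "finite A"
  let ?P = "{p\<in>{1..N}\<times>A. n = snd p + 2 * fst p}"
  have "inj_on fst ?P" by (auto simp: inj_on_def)
  then have "card ?P = card (fst ` ?P)" by (simp add: card_image)
  also have "\<dots> \<le> card {1..N}" by (intro card_mono) auto
  finally show ?thesis by simp
qed

lemma card_P_A: "finite (A::nat set) \<Longrightarrow> card {p\<in>{1..N}\<times>A. n = snd p + 2 * fst p} \<le> card A"
proof -
  assume fA: "finite A"
  let ?P = "{p\<in>{1..N}\<times>A. n = snd p + 2 * fst p}"
  have "inj_on snd ?P" by (auto simp: inj_on_def)
  then have "card ?P = card (snd ` ?P)" by (simp add: card_image)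
  also have "\<dots> \<le> card A" by (intro card_mono fA) auto
  finally show ?thesis by simp
qed

lemma convs_bound:
  assumes fA: "finite A" and c: "\<And>n. card {p\<in>{1..N}\<times>A. n = snd p + 2 * fst p} \<le> c"
  shows "(\<Sum>n<S. (norm (convs N a A n))^2) \<le> real c * real N * (\<Sum>m\<in>A. (norm (a m))^2)"
proof -
  let ?P = "\<lambda>n. {p\<in>{1..N}\<times>A. n = snd p + 2 * fst p}"
  have fin: "finite ({1..N}\<times>A)" using fA by auto
  have "(norm (convs N a A n))^2 \<le> real c * (\<Sum>p\<in>{1..N}\<times>A. if n = snd p + 2 * fst p then (norm (a (snd p)))^2 else 0)" for n
  proof -
    have "(norm (convs N a A n))^2 \<le> real (card (?P n)) * (\<Sum>p\<in>?P n. (norm (a (snd p)))^2)"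
      unfolding convs_alt[OF fA] by (rule cs_card)
    also have "\<dots> \<le> real c * (\<Sum>p\<in>?P n. (norm (a (snd p)))^2)"
      using c[of n] by (intro mult_right_mono sum_nonneg) auto
    also have "(\<Sum>p\<in>?P n. (norm (a (snd p)))^2) = (\<Sum>p\<in>{1..N}\<times>A. if n = snd p + 2 * fst p then (norm (a (snd p)))^2 else 0)"
      using fin by (simp add: sum.inter_filter)
    finally show ?thesis .
  qed
  then have "(\<Sum>n<S. (norm (convs N a A n))^2) \<le> (\<Sum>n<S. real c * (\<Sum>p\<in>{1..N}\<times>A. if n = snd p + 2 * fst p then (norm (a (snd p)))^2 else 0))"
    by (intro sum_mono)
  also have "\<dots> = real c * (\<Sum>p\<in>{1..N}\<times>A. \<Sum>n<S. if n = snd p + 2 * fst p then (norm (a (snd p)))^2 else 0)"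
    unfolding sum_distrib_left[symmetric] by (subst sum.swap) (rule refl)
  also have "\<dots> \<le> real c * (\<Sum>p\<in>{1..N}\<times>A. (norm (a (snd p)))^2)"
  proof (intro mult_left_mono sum_mono)
    fix p assume "p \<in> {1..N}\<times>A"
    have "(\<Sum>n<S. if n = snd p + 2 * fst p then (norm (a (snd p)))^2 else 0) = 
         (if snd p + 2 * fst p < S then (norm (a (snd p)))^2 else 0)"
      by (simp add: sum.delta')
    then show "(\<Sum>n<S. if n = snd p + 2 * fst p then (norm (a (snd p)))^2 else 0) \<le> (norm (a (snd p)))^2"
      by simp
  qed simp
  also have "(\<Sum>p\<in>{1..N}\<times>A. (norm (a (snd p)))^2) = real N * (\<Sum>m\<in>A. (norm (a m))^2)"
  proof -
    have "(\<Sum>p\<in>{1..N}\<times>A. (norm (a (snd p)))^2) = (\<Sum>j\<in>{1..N}. \<Sum>m\<in>A. (norm (a m))^2)"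
      using sum.cartesian_product[of "\<lambda>j m. (norm (a m))^2" "A" "{1..N}"] by (simp add: split_def)
    then show ?thesis by simp
  qed
  finally show ?thesis by (simp add: mult.assoc)
qed

definition trunc :: "nat \<Rightarrow> (nat \<Rightarrow> complex) \<Rightarrow> nat \<Rightarrow> complex" where
  "trunc K a n = (if n < K then a n else 0)"

definition Gap :: "nat \<Rightarrow> nat \<Rightarrow> (nat \<Rightarrow> complex) \<Rightarrow> nat \<Rightarrow> complex" where
  "Gap N K a n = trunc K a n - convs N a {..<K} n / of_nat N"

definition Bpoly :: "nat \<Rightarrow> real \<Rightarrow> real" where
  "Bpoly N t = (\<Sum>j\<in>{1..N}. t^(2*j)) / real N"

lemma convs_zero: "K + 2*N \<le> n \<Longrightarrow> convs N a {..<K} n = 0"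
  unfolding convs_def by (intro sum.neutral ballI) auto

lemma Gap_zero: "K + 2*N \<le> n \<Longrightarrow> Gap N K a n = 0"
  unfolding Gap_def trunc_def using convs_zero[of K N n a] by auto

lemma Gap_finsupp: "finsupp_seq (Gap N K a)"
  unfolding finsupp_seq_def
proof (rule finite_subset[of _ "{..<K+2*N}"])
  show "{n. Gap N K a n \<noteq> 0} \<subseteq> {..<K + 2 * N}"
  proof
    fix x assume "x \<in> {n. Gap N K a n \<noteq> 0}"
    then show "x \<in> {..<K + 2 * N}" using Gap_zero[of K N x a] by (cases "K+2*N \<le> x") auto
  qed
qed simp

lemma pseries_finite:
  assumes "\<And>n. S \<le> n \<Longrightarrow> G n = 0"
  shows "pseries G t = (\<Sum>n<S. G n * of_real t ^ n)"
  unfolding pseries_def by (rule suminf_finite) (auto simp: assms not_less)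

lemma pseries_Gap:
  assumes N: "N \<ge> 1"
  shows "pseries (Gap N K a) t = (\<Sum>n<K. a n * of_real t ^ n) * (1 - of_real (Bpoly N t))"
proof -
  let ?S = "K + 2*N"
  let ?t = "complex_of_real t"
  have "pseries (Gap N K a) t = (\<Sum>n<?S. Gap N K a n * ?t ^ n)"
    by (rule pseries_finite) (rule Gap_zero)
  also have "\<dots> = (\<Sum>n<?S. trunc K a n * ?t ^ n) - (\<Sum>n<?S. convs N a {..<K} n * ?t ^ n) / of_nat N"
    unfolding Gap_def by (simp add: algebra_simps sum_subtractf sum_divide_distrib)
  also have "(\<Sum>n<?S. trunc K a n * ?t ^ n) = (\<Sum>n<K. a n * ?t ^ n)"
  proof -
    have "(\<Sum>n<?S. trunc K a n * ?t ^ n) = (\<Sum>n\<in>{..<K}. trunc K a n * ?t ^ n)"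
      by (rule sum.mono_neutral_right) (auto simp: trunc_def)
    then show ?thesis by (simp add: trunc_def)
  qed
  also have "(\<Sum>n<?S. convs N a {..<K} n * ?t ^ n) = (\<Sum>j\<in>{1..N}. ?t^(2*j)) * (\<Sum>m<K. a m * ?t ^ m)"
  proof -
    have "(\<Sum>n<?S. convs N a {..<K} n * ?t ^ n) = 
        (\<Sum>n<?S. \<Sum>j\<in>{1..N}. \<Sum>m<K. if n = m + 2*j then a m * ?t ^ n else 0)"
      unfolding convs_def sum_distrib_right by (intro sum.cong refl) simp
    also have "\<dots> = (\<Sum>j\<in>{1..N}. \<Sum>m<K. \<Sum>n<?S. if n = m + 2*j then a m * ?t ^ n else 0)"
      by (subst sum.swap) (subst (2) sum.swap, rule refl)
    also have "\<dots> = (\<Sum>j\<in>{1..N}. \<Sum>m<K. a m * ?t ^ (m + 2*j))"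
      by (intro sum.cong refl) (simp add: sum.delta')
    also have "\<dots> = (\<Sum>j\<in>{1..N}. ?t^(2*j)) * (\<Sum>m<K. a m * ?t ^ m)"
      by (simp add: sum_distrib_left sum_distrib_right power_add algebra_simps)
    finally show ?thesis .
  qed
  finally show ?thesis using N
    by (simp add: Bpoly_def algebra_simps)
qed

lemma one_minus_pow_le: 
  fixes x :: real assumes "0 \<le> x" "x \<le> 1" shows "1 - x^j \<le> real j * (1 - x)"
proof (induction j)
  case (Suc j)
  have "x^j * (1 - x) \<le> 1 * (1 - x)" using assms by (intro mult_right_mono) (auto simp: power_le_one)
  then show ?case using Suc by (simp add: algebra_simps)
qed simp

lemma Bpoly_props:
  assumes N: "N \<ge> 1" and t: "\<bar>t\<bar> < 1"
  shows "0 \<le> Bpoly N t" "Bpoly N t \<le> 1" "1 - Bpoly N t \<le> real N * (1 - t^2)"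
    "Bpoly N t \<le> 1 / (real N * (1 - t^2))"
proof -
  have t2: "0 \<le> t^2" "t^2 < 1" using t by (auto simp: abs_square_less_1)
  have pj: "t^(2*j) = (t^2)^j" for j by (simp add: power_mult)
  show "0 \<le> Bpoly N t" unfolding Bpoly_def by (intro divide_nonneg_nonneg sum_nonneg) (auto simp: pj)
  have "(\<Sum>j\<in>{1..N}. t^(2*j)) \<le> (\<Sum>j\<in>{1..N}. 1)"
    using t2 by (intro sum_mono) (auto simp: pj power_le_one)
  then show "Bpoly N t \<le> 1" unfolding Bpoly_def using N by simp
  have "1 - Bpoly N t = (\<Sum>j\<in>{1..N}. 1 - (t^2)^j) / real N"
    unfolding Bpoly_def using N by (simp add: sum_subtractf pj diff_divide_distrib)
  also have "\<dots> \<le> (\<Sum>j\<in>{1..N}. real N * (1 - t^2)) / real N"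
  proof (intro divide_right_mono sum_mono)
    fix j assume "j \<in> {1..N}"
    then have "1 - (t^2)^j \<le> real j * (1 - t^2)" using t2 by (intro one_minus_pow_le) auto
    also have "\<dots> \<le> real N * (1 - t^2)" using \<open>j \<in> {1..N}\<close> t2 by (intro mult_right_mono) auto
    finally show "1 - (t^2)^j \<le> real N * (1 - t^2)" .
  qed simp
  also have "\<dots> = real N * (1 - t^2)" using N by simp
  finally show "1 - Bpoly N t \<le> real N * (1 - t^2)" .
  have g: "summable (\<lambda>j. (t^2)^j)" using t2 by (intro summable_geometric) auto
  have "(\<Sum>j\<in>{1..N}. t^(2*j)) \<le> (\<Sum>j. (t^2)^j)"
    unfolding pj by (rule sum_le_suminf[OF g]) (use t2 in auto)
  also have "\<dots> = 1 / (1 - t^2)" using t2 by (subst suminf_geometric) auto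
  finally show "Bpoly N t \<le> 1 / (real N * (1 - t^2))"
    unfolding Bpoly_def using N t2 by (simp add: divide_simps mult.commute)
qed

lemma Bpoly_tendsto:
  assumes t: "\<bar>t\<bar> < 1" shows "(\<lambda>N. Bpoly N t) \<longlonglongrightarrow> 0"
proof -
  have t2: "0 < 1 - t^2" using t by (auto simp: abs_square_less_1)
  have "(\<lambda>N. 1 / (real N * (1 - t^2))) \<longlonglongrightarrow> 0"
    using lim_const_over_n[of "1 / (1 - t^2)"] by (simp add: mult.commute)
  show ?thesis
  proof (rule tendsto_sandwich[OF _ _ tendsto_const \<open>(\<lambda>N. 1 / (real N * (1 - t^2))) \<longlonglongrightarrow> 0\<close>])
    show "\<forall>\<^sub>F N in sequentially. 0 \<le> Bpoly N t"
      using Bpoly_props(1)[OF _ t] by (auto simp: eventually_sequentially intro!: exI[of _ 1])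
    show "\<forall>\<^sub>F N in sequentially. Bpoly N t \<le> 1 / (real N * (1 - t^2))"
      using Bpoly_props(4)[OF _ t] by (auto simp: eventually_sequentially intro!: exI[of _ 1])
  qed
qed

definition tl2 :: "nat \<Rightarrow> (nat \<Rightarrow> complex) \<Rightarrow> nat \<Rightarrow> complex" where
  "tl2 K a n = (if n < K then 0 else a n)"

definition Tt :: "nat \<Rightarrow> (nat \<Rightarrow> complex) \<Rightarrow> real" where
  "Tt K a = (\<Sum>n. (norm (tl2 K a n))^2)"

lemma tl2_summable: "l2seq a \<Longrightarrow> summable (\<lambda>n. (norm (tl2 K a n))^2)"
  unfolding l2seq_def
  by (rule summable_comparison_test[of _ "\<lambda>n. (norm (a n))^2"]) (auto simp: tl2_def)

lemma Tt_nonneg: "l2seq a \<Longrightarrow> 0 \<le> Tt K a"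
  unfolding Tt_def by (intro suminf_nonneg tl2_summable) auto

lemma Tt_small:
  assumes "l2seq a" "0 < r" shows "\<exists>K0. \<forall>K\<ge>K0. Tt K a < r"
proof -
  have s: "summable (\<lambda>n. (norm (a n))^2)" using assms unfolding l2seq_def by auto
  obtain K0 where K0: "\<forall>K\<ge>K0. norm (\<Sum>i. (norm (a (i + K)))^2) < r"
    using suminf_exist_split[OF assms(2) s] by auto
  have "Tt K a = (\<Sum>i. (norm (a (i + K)))^2)" for K
  proof -
    have ss: "(\<lambda>n. (norm (tl2 K a n))^2) sums (Tt K a)"
      unfolding Tt_def by (rule summable_sums[OF tl2_summable[OF assms(1)]])
    have "(\<lambda>i. (norm (tl2 K a (i + K)))^2) sums (Tt K a)"
      using ss by (subst sums_zero_iff_shift[where n=K]) (simp_all add: tl2_def)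
    then show ?thesis by (simp add: tl2_def sums_iff)
  qed
  then show ?thesis using K0 by (auto intro!: exI[of _ K0])
qed

lemma Tt_ge_sum:
  assumes "l2seq a" shows "(\<Sum>m\<in>{L..<K}. (norm (a m))^2) \<le> Tt L a"
proof -
  have "(\<Sum>m\<in>{L..<K}. (norm (a m))^2) = (\<Sum>m\<in>{L..<K}. (norm (tl2 L a m))^2)"
    by (intro sum.cong) (auto simp: tl2_def)
  also have "\<dots> \<le> Tt L a" unfolding Tt_def
    by (intro sum_le_suminf tl2_summable assms) auto
  finally show ?thesis .
qed

lemma pseries_split:
  assumes a: "l2seq a" and t: "\<bar>t\<bar> < 1"
  shows "pseries a t = (\<Sum>n<K. a n * of_real t ^ n) + (\<Sum>n. tl2 K a n * of_real t ^ n)"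
proof -
  have s1: "summable (\<lambda>n. tl2 K a n * of_real t ^ n)"
    by (rule ps_cs(1)[OF tl2_summable[OF a] t])
  have s2: "summable (\<lambda>n. trunc K a n * of_real t ^ n)"
    by (rule summable_finite[of "{..<K}"]) (auto simp: trunc_def)
  have "pseries a t = (\<Sum>n. trunc K a n * of_real t ^ n + tl2 K a n * of_real t ^ n)"
    unfolding pseries_def by (intro suminf_cong) (auto simp: trunc_def tl2_def)
  also have "\<dots> = (\<Sum>n. trunc K a n * of_real t ^ n) + (\<Sum>n. tl2 K a n * of_real t ^ n)"
    by (rule suminf_add[OF s2 s1, symmetric])
  also have "(\<Sum>n. trunc K a n * of_real t ^ n) = (\<Sum>n<K. a n * of_real t ^ n)"
    by (subst suminf_finite[of "{..<K}"]) (auto simp: trunc_def)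
  finally show ?thesis .
qed

lemma sq_sum_le: fixes u v :: complex shows "(norm (u + v))^2 \<le> 2 * (norm u)^2 + 2 * (norm v)^2"
proof -
  have "(norm (u + v))^2 \<le> (norm u + norm v)^2" by (intro power_mono norm_triangle_ineq) auto
  also have "\<dots> \<le> 2 * (norm u)^2 + 2 * (norm v)^2"
    using sum_squares_bound[of "norm u" "norm v"] by (simp add: power2_sum)
  finally show ?thesis .
qed

lemma pt_est:
  assumes a: "l2seq a" and N: "N \<ge> 1" and t: "\<bar>t\<bar> < 1"
  shows "(norm (pseries (Gap N K a) t - pseries a t))^2 \<le> 2 * (Tt K a * real N) + 2 * ((norm (pseries a t))^2 * (Bpoly N t)^2)"
proof -
  define X where "X = (\<Sum>n<K. a n * of_real t ^ n)"
  define R where "R = (\<Sum>n. tl2 K a n * of_real t ^ n)"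
  define B where "B = Bpoly N t"
  have t2: "0 < 1 - t^2" using t by (auto simp: abs_square_less_1)
  have h: "pseries a t = X + R" unfolding X_def R_def by (rule pseries_split[OF a t])
  have R: "(norm R)^2 \<le> Tt K a / (1 - t^2)"
    unfolding R_def Tt_def by (rule ps_cs(2)[OF tl2_summable[OF a] t])
  have B: "0 \<le> B" "B \<le> 1" "1 - B \<le> real N * (1 - t^2)" using Bpoly_props[OF N t] by (auto simp: B_def)
  have "pseries (Gap N K a) t - pseries a t = (- R) * of_real (1 - B) + (- (pseries a t * of_real B))"
    unfolding pseries_Gap[OF N] h X_def[symmetric] by (simp add: B_def algebra_simps)
  then have "(norm (pseries (Gap N K a) t - pseries a t))^2 \<le> 2 * (norm ((- R) * of_real (1 - B)))^2 + 2 * (norm (pseries a t * of_real B))^2"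
    using sq_sum_le by (metis norm_minus_cancel)
  also have "(norm ((- R) * of_real (1 - B)))^2 = (norm R)^2 * (1 - B)^2"
    unfolding norm_mult norm_minus_cancel norm_of_real power_mult_distrib power2_abs ..
  also have "(norm (pseries a t * of_real B))^2 = (norm (pseries a t))^2 * B^2"
    by (simp add: norm_mult power_mult_distrib)
  also have "(norm R)^2 * (1 - B)^2 \<le> Tt K a * real N"
  proof -
    have "(1 - B)^2 \<le> 1 - B" using B mult_left_le[of "1 - B" "1 - B"] by (simp add: power2_eq_square)
    also have "\<dots> \<le> real N * (1 - t^2)" by (rule B(3))
    finally have b1: "(1 - B)^2 \<le> real N * (1 - t^2)" .
    have "(norm R)^2 * (1 - B)^2 \<le> (Tt K a / (1 - t^2)) * (real N * (1 - t^2))"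
      using Tt_nonneg[OF a] t2 by (intro mult_mono R b1) auto
    also have "\<dots> = Tt K a * real N" using t2 by simp
    finally show ?thesis .
  qed
  finally show ?thesis by (simp add: B_def)
qed

lemma convs_split:
  assumes "L \<le> K" shows "convs N a {..<K} n = convs N a {..<L} n + convs N a {L..<K} n"
proof -
  have U: "{..<K} = {..<L} \<union> {L..<K}" using assms by auto
  have e: "(\<Sum>m\<in>{..<K}. g m) = (\<Sum>m\<in>{..<L}. g m) + (\<Sum>m\<in>{L..<K}. g m)" for g :: "nat \<Rightarrow> complex"
    unfolding U by (rule sum.union_disjoint) auto
  show ?thesis unfolding convs_def e by (simp add: sum.distrib)
qed

lemma l2_est:
  assumes a: "l2seq a" and N: "N \<ge> 1" and LK: "L \<le> K"
  shows "l2dist2 (Gap N K a) a \<le> 2 * Tt K a + 4 * real L * (\<Sum>n. (norm (a n))^2) / real N + 4 * Tt L a"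
proof -
  let ?C = "\<lambda>n. convs N a {..<K} n"
  let ?S = "K + 2*N"
  define A2 where "A2 = (\<Sum>n. (norm (a n))^2)"
  have sa: "summable (\<lambda>n. (norm (a n))^2)" using a unfolding l2seq_def by auto
  have Npos: "real N > 0" using N by simp
  have pw: "(norm (Gap N K a n - a n))^2 \<le> 2 * (norm (tl2 K a n))^2 + 2 * ((norm (?C n))^2 / (real N)^2)" for n
  proof -
    have "Gap N K a n - a n = (- tl2 K a n) + (- (?C n / of_nat N))"
      unfolding Gap_def trunc_def tl2_def by auto
    then have "(norm (Gap N K a n - a n))^2 \<le> 2 * (norm (- tl2 K a n))^2 + 2 * (norm (- (?C n / of_nat N)))^2"
      using sq_sum_le by metis
    also have "(norm (- (?C n / of_nat N)))^2 = (norm (?C n))^2 / (real N)^2"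
      by (simp add: norm_divide power_divide)
    finally show ?thesis by simp
  qed
  have sC: "summable (\<lambda>n. 2 * ((norm (?C n))^2 / (real N)^2))"
    by (rule summable_finite[of "{..<?S}"]) (auto simp: convs_zero not_less)
  have sT: "summable (\<lambda>n. 2 * (norm (tl2 K a n))^2)"
    by (intro summable_mult tl2_summable a)
  have sG: "summable (\<lambda>n. (norm (Gap N K a n - a n))^2)"
    by (rule summable_comparison_test[OF _ summable_add[OF sT sC]]) (use pw in auto)
  have "l2dist2 (Gap N K a) a \<le> (\<Sum>n. 2 * (norm (tl2 K a n))^2 + 2 * ((norm (?C n))^2 / (real N)^2))"
    unfolding l2dist2_def by (intro suminf_le pw summable_add sT sC sG)
  also have "\<dots> = 2 * Tt K a + (\<Sum>n. 2 * ((norm (?C n))^2 / (real N)^2))"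
    unfolding Tt_def by (subst suminf_add[OF sT sC, symmetric]) (simp add: suminf_mult tl2_summable[OF a])
  also have "(\<Sum>n. 2 * ((norm (?C n))^2 / (real N)^2)) = (\<Sum>n<?S. 2 * ((norm (?C n))^2 / (real N)^2))"
    by (rule suminf_finite) (auto simp: convs_zero not_less)
  also have "\<dots> = 2 / (real N)^2 * (\<Sum>n<?S. (norm (?C n))^2)"
    by (simp add: sum_distrib_left)
  also have "(\<Sum>n<?S. (norm (?C n))^2) \<le> 2 * (real L * real N * A2) + 2 * (real N * real N * Tt L a)"
  proof -
    have "(\<Sum>n<?S. (norm (?C n))^2) \<le> (\<Sum>n<?S. 2 * (norm (convs N a {..<L} n))^2 + 2 * (norm (convs N a {L..<K} n))^2)"
      by (intro sum_mono) (simp only: convs_split[OF LK] sq_sum_le)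
    also have "\<dots> = 2 * (\<Sum>n<?S. (norm (convs N a {..<L} n))^2) + 2 * (\<Sum>n<?S. (norm (convs N a {L..<K} n))^2)"
      by (simp add: sum.distrib sum_distrib_left)
    also have "(\<Sum>n<?S. (norm (convs N a {..<L} n))^2) \<le> real L * real N * A2"
    proof -
      have "(\<Sum>n<?S. (norm (convs N a {..<L} n))^2) \<le> real (card {..<L}) * real N * (\<Sum>m\<in>{..<L}. (norm (a m))^2)"
        by (rule convs_bound) (use card_P_A[of "{..<L}"] in auto)
      also have "\<dots> \<le> real L * real N * A2"
        unfolding A2_def card_lessThan by (intro mult_left_mono sum_le_suminf sa) auto
      finally show ?thesis .
    qed
    also have "(\<Sum>n<?S. (norm (convs N a {L..<K} n))^2) \<le> real N * real N * Tt L a"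
    proof -
      have "(\<Sum>n<?S. (norm (convs N a {L..<K} n))^2) \<le> real N * real N * (\<Sum>m\<in>{L..<K}. (norm (a m))^2)"
        by (rule convs_bound) (use card_P_N[of "{L..<K}"] in auto)
      also have "\<dots> \<le> real N * real N * Tt L a"
        by (intro mult_left_mono Tt_ge_sum a) auto
      finally show ?thesis .
    qed
    finally show ?thesis by simp
  qed
  then have "2 / (real N)^2 * (\<Sum>n<?S. (norm (?C n))^2) \<le> 2 / (real N)^2 * (2 * (real L * real N * A2) + 2 * (real N * real N * Tt L a))"
    by (intro mult_left_mono) auto
  also have "\<dots> = 4 * real L * A2 / real N + 4 * Tt L a"
    using Npos by (simp add: field_simps power2_eq_square)
  finally show ?thesis unfolding A2_def by simp
qed

lemma space_M:
  assumes "sets M = sets (restrict_space borel {-1<..<(1::real)})"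
  shows "space M = {-1<..<1}"
  using sets_eq_imp_space_eq[OF assms] by simp

lemma meas_M:
  assumes "sets M = sets (restrict_space borel {-1<..<(1::real)})"
    and "f \<in> borel_measurable borel"
  shows "f \<in> borel_measurable M"
proof -
  have "f \<in> borel_measurable (restrict_space borel {-1<..<(1::real)})"
    by (rule measurable_restrict_space1[OF assms(2)])
  then show ?thesis unfolding measurable_cong_sets[OF assms(1) refl] .
qed

lemma finsupp_l2: "finsupp_seq G \<Longrightarrow> l2seq G"
  unfolding l2seq_def finsupp_seq_def
  by (rule summable_finite[of "{n. G n \<noteq> 0}"]) auto

lemma pseries_finsupp:
  assumes "finsupp_seq G" shows "pseries G = (\<lambda>t. \<Sum>n\<in>{n. G n \<noteq> 0}. G n * of_real t ^ n)"
  using assms unfolding pseries_def finsupp_seq_def by (intro ext suminf_finite) auto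

lemma pseries_finsupp_meas:
  assumes "sets M = sets (restrict_space borel {-1<..<(1::real)})" "finsupp_seq G"
  shows "pseries G \<in> borel_measurable M"
  unfolding pseries_finsupp[OF assms(2)] by (rule meas_M[OF assms(1)]) measurable

lemma pseries_meas:
  assumes M: "sets M = sets (restrict_space borel {-1<..<(1::real)})" and a: "l2seq a"
  shows "pseries a \<in> borel_measurable M"
proof (rule borel_measurable_LIMSEQ_metric)
  show "(\<lambda>t. \<Sum>n<i. a n * of_real t ^ n) \<in> borel_measurable M" for i
    by (rule meas_M[OF M]) measurable
  fix t assume "t \<in> space M"
  then have t: "\<bar>t\<bar> < 1" using space_M[OF M] by auto
  show "(\<lambda>i. \<Sum>n<i. a n * of_real t ^ n) \<longlonglongrightarrow> pseries a t"
    unfolding pseries_def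
    by (rule summable_LIMSEQ, rule ps_cs(1)[of a t]) (use a t in \<open>auto simp: l2seq_def\<close>)
qed

lemma l2_diff_summable:
  assumes "l2seq a" "l2seq b" shows "summable (\<lambda>n. (norm (a n - b n))^2)"
proof (rule summable_comparison_test[of _ "\<lambda>n. 2 * (norm (a n))^2 + 2 * (norm (b n))^2"])
  show "\<exists>N. \<forall>n\<ge>N. norm ((norm (a n - b n))^2) \<le> 2 * (norm (a n))^2 + 2 * (norm (b n))^2"
    using sq_sum_le[of "a _" "- b _"] by auto
  show "summable (\<lambda>n. 2 * (norm (a n))^2 + 2 * (norm (b n))^2)"
    using assms unfolding l2seq_def by (intro summable_add summable_mult) auto
qed

lemma l2dist2_nonneg: "l2seq a \<Longrightarrow> l2seq b \<Longrightarrow> 0 \<le> l2dist2 a b"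
  unfolding l2dist2_def by (intro suminf_nonneg l2_diff_summable) auto

lemma pseries_diff_bound:
  assumes a: "l2seq a" and b: "l2seq b" and t: "\<bar>t\<bar> < 1"
  shows "(norm (pseries a t - pseries b t))^2 \<le> l2dist2 a b / (1 - t^2)"
proof -
  have sa: "summable (\<lambda>n. a n * of_real t ^ n)" using ps_cs(1)[of a t] a t by (auto simp: l2seq_def)
  have sb: "summable (\<lambda>n. b n * of_real t ^ n)" using ps_cs(1)[of b t] b t by (auto simp: l2seq_def)
  have "pseries a t - pseries b t = (\<Sum>n. (a n - b n) * of_real t ^ n)"
    unfolding pseries_def by (subst suminf_diff[OF sa sb]) (simp add: algebra_simps)
  also have "(norm \<dots>)^2 \<le> l2dist2 a b / (1 - t^2)"
    unfolding l2dist2_def by (rule ps_cs(2)[OF l2_diff_summable[OF a b] t])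
  finally show ?thesis .
qed

lemma fwd:
  assumes M: "sets M = sets (restrict_space borel {-1<..<(1::real)})"
    and g: "l2seq g" and f: "L2fun M f" and cl: "in_graph_closure_A M g f"
  shows "dom_Amax M g \<and> (AE x in M. f x = pseries g x)"
proof -
  obtain G where G: "\<And>k. finsupp_seq (G k)" and Gl: "(\<lambda>k. l2dist2 (G k) g) \<longlonglongrightarrow> 0"
    and GM: "(\<lambda>k. L2dist2 M (pseries (G k)) f) \<longlonglongrightarrow> 0"
    using cl unfolding in_graph_closure_A_def by blast
  have fm: "f \<in> borel_measurable M" using f unfolding L2fun_def by auto
  have hm: "pseries g \<in> borel_measurable M" by (rule pseries_meas[OF M g])
  have pt: "(\<lambda>k. pseries (G k) t) \<longlonglongrightarrow> pseries g t" if t: "t \<in> space M" for t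
  proof -
    have t1: "\<bar>t\<bar> < 1" using t space_M[OF M] by auto
    have t2: "0 < 1 - t^2" using t1 by (auto simp: abs_square_less_1)
    have "(\<lambda>k. (norm (pseries (G k) t - pseries g t))^2) \<longlonglongrightarrow> 0"
    proof (rule tendsto_sandwich[OF _ _ tendsto_const])
      show "\<forall>\<^sub>F k in sequentially. 0 \<le> (norm (pseries (G k) t - pseries g t))^2" by simp
      show "\<forall>\<^sub>F k in sequentially. (norm (pseries (G k) t - pseries g t))^2 \<le> l2dist2 (G k) g / (1 - t^2)"
        using pseries_diff_bound[OF finsupp_l2[OF G] g t1] by simp
      show "(\<lambda>k. l2dist2 (G k) g / (1 - t^2)) \<longlonglongrightarrow> 0"
        using tendsto_divide[OF Gl tendsto_const[of "1 - t^2"]] t2 by simp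
    qed
    then have "(\<lambda>k. norm (pseries (G k) t - pseries g t)) \<longlonglongrightarrow> 0"
      using tendsto_real_sqrt by fastforce
    then show ?thesis by (simp add: tendsto_norm_zero_iff LIM_zero_iff)
  qed
  define u where "u k x = ennreal ((norm (pseries (G k) x - f x))^2)" for k x
  have um: "u k \<in> borel_measurable M" for k
    unfolding u_def using pseries_finsupp_meas[OF M G[of k]] fm by measurable
  have "(\<integral>\<^sup>+ x. ennreal ((norm (pseries g x - f x))^2) \<partial>M) = (\<integral>\<^sup>+ x. liminf (\<lambda>k. u k x) \<partial>M)"
  proof (rule nn_integral_cong)
    fix x assume x: "x \<in> space M"
    have "(\<lambda>k. u k x) \<longlonglongrightarrow> ennreal ((norm (pseries g x - f x))^2)"
      unfolding u_def by (intro tendsto_ennrealI tendsto_intros pt x)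
    then show "ennreal ((norm (pseries g x - f x))^2) = liminf (\<lambda>k. u k x)"
      by (simp add: lim_imp_Liminf)
  qed
  also have "\<dots> \<le> liminf (\<lambda>k. integral\<^sup>N M (u k))" by (rule nn_integral_liminf[OF um])
  also have "liminf (\<lambda>k. integral\<^sup>N M (u k)) = 0"
    using GM unfolding u_def L2dist2_def by (simp add: lim_imp_Liminf)
  finally have "(\<integral>\<^sup>+ x. ennreal ((norm (pseries g x - f x))^2) \<partial>M) = 0" by simp
  then have "AE x in M. ennreal ((norm (pseries g x - f x))^2) = 0"
    by (subst nn_integral_0_iff_AE[symmetric]) (use hm fm in measurable)
  then have ae: "AE x in M. f x = pseries g x" by eventually_elim simp
  have "integrable M (\<lambda>x. (norm (f x))^2)" using f unfolding L2fun_def by auto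
  then have "integrable M (\<lambda>x. (norm (pseries g x))^2)"
    by (rule integrable_cong_AE_imp) (use hm ae in \<open>auto elim: AE_mp\<close>)
  then show ?thesis using g hm ae unfolding dom_Amax_def L2fun_def by auto
qed

lemma Bpoly_meas:
  assumes M: "sets M = sets (restrict_space borel {-1<..<(1::real)})"
  shows "Bpoly N \<in> borel_measurable M"
  by (rule meas_M[OF M]) (unfold Bpoly_def, measurable)

lemma approx:
  assumes M: "sets M = sets (restrict_space borel {-1<..<(1::real)})" and fin: "finite_measure M"
    and g: "l2seq g" and hL: "L2fun M (pseries g)" and ae: "AE x in M. f x = pseries g x"
    and e: "0 < \<epsilon>"
  shows "\<exists>G. finsupp_seq G \<and> l2dist2 G g < \<epsilon> \<and> L2dist2 M (pseries G) f < ennreal \<epsilon>"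
proof -
  define h where "h = pseries g"
  define A2 where "A2 = (\<Sum>n. (norm (g n))^2)"
  define Mt where "Mt = measure M (space M)"
  have A2: "0 \<le> A2" unfolding A2_def using g by (intro suminf_nonneg) (auto simp: l2seq_def)
  have Mt: "0 \<le> Mt" unfolding Mt_def by simp
  have emM: "emeasure M (space M) = ennreal Mt"
    unfolding Mt_def using fin by (simp add: finite_measure.emeasure_eq_measure)
  have hm: "h \<in> borel_measurable M" using hL unfolding h_def L2fun_def by auto
  have hi: "integrable M (\<lambda>x. (norm (h x))^2)" using hL unfolding h_def L2fun_def by auto
  have sp: "\<And>x. x \<in> space M \<Longrightarrow> \<bar>x\<bar> < 1" using space_M[OF M] by auto
  define u where "u N x = 2 * ((norm (h x))^2 * (Bpoly N x)^2)" for N x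
  have um: "u N \<in> borel_measurable M" for N
    unfolding u_def using hm Bpoly_meas[OF M, of N] by measurable
  have dct: "(\<lambda>N. (\<integral>\<^sup>+x. norm (0 - u N x) \<partial>M)) \<longlonglongrightarrow> 0"
  proof (rule nn_integral_dominated_convergence_norm[where w="\<lambda>x. 2 * (norm (h x))^2"])
    show "(\<lambda>x. 2 * (norm (h x))^2) \<in> borel_measurable M" using hm by measurable
    show "AE x in M. norm (u N x) \<le> 2 * (norm (h x))^2" for N
    proof (rule AE_I2)
      fix x assume x: "x \<in> space M"
      show "norm (u N x) \<le> 2 * (norm (h x))^2"
      proof (cases "N = 0")
        case True then show ?thesis by (simp add: u_def Bpoly_def)
      next
        case False
        then have B: "0 \<le> Bpoly N x" "Bpoly N x \<le> 1" using Bpoly_props[of N x] sp[OF x] by auto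
        then have "(Bpoly N x)^2 \<le> 1" by (simp add: power_le_one)
        then have "(norm (h x))^2 * (Bpoly N x)^2 \<le> (norm (h x))^2 * 1" by (intro mult_left_mono) auto
        then show ?thesis by (simp add: u_def)
      qed
    qed
    have hi2: "integrable M (\<lambda>x. 2 * (norm (h x))^2)" using hi by simp
    show "(\<integral>\<^sup>+x. ennreal (2 * (norm (h x))^2) \<partial>M) < \<infinity>"
      using integrableD(2)[OF hi2] by (simp add: top.not_eq_extremum)
    show "AE x in M. (\<lambda>N. u N x) \<longlonglongrightarrow> 0"
    proof (rule AE_I2)
      fix x assume x: "x \<in> space M"
      show "(\<lambda>N. u N x) \<longlonglongrightarrow> 0"
        unfolding u_def using tendsto_mult[OF tendsto_const[of "(norm (h x))^2"] tendsto_power[OF Bpoly_tendsto[OF sp[OF x]], of 2]]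
        by (simp add: tendsto_mult_right_zero)
    qed
  qed (use um in auto)
  have "eventually (\<lambda>N. (\<integral>\<^sup>+x. norm (0 - u N x) \<partial>M) < ennreal (\<epsilon>/4)) sequentially"
    using dct e by (intro order_tendstoD(2)) auto
  then obtain N2 where N2: "\<And>N. N \<ge> N2 \<Longrightarrow> (\<integral>\<^sup>+x. norm (0 - u N x) \<partial>M) < ennreal (\<epsilon>/4)"
    by (auto simp: eventually_sequentially)
  obtain L where L: "Tt L g < \<epsilon>/16" using Tt_small[OF g, of "\<epsilon>/16"] e by auto
  define N where "N = max (max 1 N2) (nat \<lceil>16 * real L * A2 / \<epsilon>\<rceil> + 1)"
  have N1: "N \<ge> 1" and NN2: "N \<ge> N2" unfolding N_def by auto
  have NL: "4 * real L * A2 / real N < \<epsilon>/4"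
  proof -
    have "16 * real L * A2 / \<epsilon> < real N" unfolding N_def by linarith
    then have "16 * real L * A2 < \<epsilon> * real N" using e by (simp add: field_simps)
    then show ?thesis using N1 by (simp add: field_simps)
  qed
  define \<delta> where "\<delta> = \<epsilon> / (8 * (real N * Mt + 1))"
  have NMt: "0 \<le> real N * Mt" using Mt by simp
  have dpos: "0 < \<delta>" unfolding \<delta>_def using e NMt by (intro divide_pos_pos) auto
  obtain K0 where K0: "\<And>K. K \<ge> K0 \<Longrightarrow> Tt K g < \<delta>" using Tt_small[OF g dpos] by auto
  define K where "K = max K0 L"
  have TK: "Tt K g < \<delta>" using K0 unfolding K_def by auto
  have LK: "L \<le> K" unfolding K_def by auto
  have TK0: "0 \<le> Tt K g" by (rule Tt_nonneg[OF g])
  have d8: "\<delta> \<le> \<epsilon>/8" unfolding \<delta>_def using e NMt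
    by (intro divide_left_mono) (auto intro: mult_pos_pos add_nonneg_pos)
  have dN: "2 * \<delta> * real N * Mt \<le> \<epsilon>/4"
  proof -
    have "2 * \<delta> * real N * Mt = \<epsilon> / 4 * (real N * Mt / (real N * Mt + 1))"
      unfolding \<delta>_def using NMt by (simp add: field_simps add_nonneg_pos)
    also have "\<dots> \<le> \<epsilon> / 4 * 1" using e NMt by (intro mult_left_mono) auto
    finally show ?thesis by simp
  qed
  define G where "G = Gap N K g"
  have "l2dist2 G g \<le> 2 * Tt K g + 4 * real L * A2 / real N + 4 * Tt L g"
    unfolding G_def A2_def by (rule l2_est[OF g N1 LK])
  also have "\<dots> < \<epsilon>" using TK d8 NL L e by linarith
  finally have l2: "l2dist2 G g < \<epsilon>" .
  have "L2dist2 M (pseries G) f = (\<integral>\<^sup>+ x. ennreal ((norm (pseries G x - h x))^2) \<partial>M)"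
    unfolding L2dist2_def by (rule nn_integral_cong_AE) (use ae in \<open>auto simp: h_def\<close>)
  also have "\<dots> \<le> (\<integral>\<^sup>+ x. ennreal (2 * (Tt K g * real N)) + ennreal (u N x) \<partial>M)"
  proof (rule nn_integral_mono)
    fix x assume x: "x \<in> space M"
    have "(norm (pseries G x - h x))^2 \<le> 2 * (Tt K g * real N) + u N x"
      unfolding G_def h_def u_def by (rule pt_est[OF g N1 sp[OF x]])
    then show "ennreal ((norm (pseries G x - h x))^2) \<le> ennreal (2 * (Tt K g * real N)) + ennreal (u N x)"
    proof -
      have "0 \<le> u N x" unfolding u_def by simp
      then have "ennreal (2 * (Tt K g * real N)) + ennreal (u N x) = ennreal (2 * (Tt K g * real N) + u N x)"
        using TK0 by (intro ennreal_plus[symmetric]) auto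
      then show ?thesis using \<open>(norm (pseries G x - h x))^2 \<le> 2 * (Tt K g * real N) + u N x\<close>
        by (simp add: ennreal_leI)
    qed
  qed
  also have "\<dots> = ennreal (2 * (Tt K g * real N)) * ennreal Mt + (\<integral>\<^sup>+x. ennreal (u N x) \<partial>M)"
    by (subst nn_integral_add) (use um in \<open>auto simp: emM\<close>)
  also have "(\<integral>\<^sup>+x. ennreal (u N x) \<partial>M) = (\<integral>\<^sup>+x. norm (0 - u N x) \<partial>M)"
    by (intro nn_integral_cong) (simp add: u_def)
  also have "ennreal (2 * (Tt K g * real N)) * ennreal Mt = ennreal (2 * (Tt K g * real N) * Mt)"
    using TK0 Mt by (simp add: ennreal_mult)
  also have "ennreal (2 * (Tt K g * real N) * Mt) + (\<integral>\<^sup>+x. norm (0 - u N x) \<partial>M) \<le> ennreal (\<epsilon>/4) + ennreal (\<epsilon>/4)"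
  proof (rule add_mono)  
    have "2 * (Tt K g * real N) * Mt \<le> 2 * \<delta> * real N * Mt"
      using TK Mt mult_right_mono[of "Tt K g" \<delta> "real N"] by (intro mult_right_mono) auto
    then show "ennreal (2 * (Tt K g * real N) * Mt) \<le> ennreal (\<epsilon>/4)" using dN by (intro ennreal_leI) auto
    show "(\<integral>\<^sup>+x. norm (0 - u N x) \<partial>M) \<le> ennreal (\<epsilon>/4)" by (rule less_imp_le[OF N2[OF NN2]])
  qed
  also have "ennreal (\<epsilon>/4) + ennreal (\<epsilon>/4) < ennreal \<epsilon>"
    using e by (subst ennreal_plus[symmetric]) (auto intro: ennreal_lessI)
  finally have LM: "L2dist2 M (pseries G) f < ennreal \<epsilon>" .
  show ?thesis using l2 LM Gap_finsupp unfolding G_def by blast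
qed

lemma bwd:
  assumes M: "sets M = sets (restrict_space borel {-1<..<(1::real)})" and fin: "finite_measure M"
    and d: "dom_Amax M g" and ae: "AE x in M. f x = pseries g x"
  shows "in_graph_closure_A M g f"
proof -
  have g: "l2seq g" and hL: "L2fun M (pseries g)" using d unfolding dom_Amax_def by auto
  have "\<forall>k. \<exists>G. finsupp_seq G \<and> l2dist2 G g < 1 / real (Suc k) \<and> L2dist2 M (pseries G) f < ennreal (1 / real (Suc k))"
    using approx[OF M fin g hL ae] by simp
  then obtain G where G: "\<And>k. finsupp_seq (G k)" and G1: "\<And>k. l2dist2 (G k) g < 1 / real (Suc k)"
    and G2: "\<And>k. L2dist2 M (pseries (G k)) f < ennreal (1 / real (Suc k))"
    by metis
  have lim0: "(\<lambda>k. 1 / real (Suc k)) \<longlonglongrightarrow> 0"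
    using LIMSEQ_inverse_real_of_nat by (simp add: inverse_eq_divide)
  have "(\<lambda>k. l2dist2 (G k) g) \<longlonglongrightarrow> 0"
  proof (rule tendsto_sandwich[OF _ _ tendsto_const lim0])
    show "\<forall>\<^sub>F k in sequentially. 0 \<le> l2dist2 (G k) g"
      using l2dist2_nonneg[OF finsupp_l2[OF G] g] by simp
    show "\<forall>\<^sub>F k in sequentially. l2dist2 (G k) g \<le> 1 / real (Suc k)"
      using G1 by (simp add: less_imp_le)
  qed
  moreover have "(\<lambda>k. L2dist2 M (pseries (G k)) f) \<longlonglongrightarrow> 0"
  proof (rule tendsto_sandwich[OF _ _ tendsto_const])
    show "\<forall>\<^sub>F k in sequentially. 0 \<le> L2dist2 M (pseries (G k)) f" by simp
    show "\<forall>\<^sub>F k in sequentially. L2dist2 M (pseries (G k)) f \<le> ennreal (1 / real (Suc k))"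
      using G2 by (simp add: less_imp_le)
    show "(\<lambda>k. ennreal (1 / real (Suc k))) \<longlonglongrightarrow> 0"
      using tendsto_ennrealI[OF lim0] by simp
  qed
  ultimately show ?thesis unfolding in_graph_closure_A_def using G by blast
qed

theorem lemma3p3:
  fixes M :: "real measure"
  assumes "sets M = sets (restrict_space borel {-1<..<(1::real)})"
    and "finite_measure M"
  shows "closable_A M \<and>
    (\<forall>g f. l2seq g \<and> L2fun M f \<longrightarrow>
       (in_graph_closure_A M g f \<longleftrightarrow> dom_Amax M g \<and> (AE x in M. f x = pseries g x)))"
proof
  show "closable_A M"
    unfolding closable_A_def
  proof (intro allI impI)
    fix g f1 f2
    assume H: "l2seq g \<and> L2fun M f1 \<and> L2fun M f2 \<and> in_graph_closure_A M g f1 \<and> in_graph_closure_A M g f2"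
    then have "AE x in M. f1 x = pseries g x" "AE x in M. f2 x = pseries g x"
      using fwd[OF assms(1)] by blast+
    then show "AE x in M. f1 x = f2 x" by eventually_elim simp
  qed
  show "\<forall>g f. l2seq g \<and> L2fun M f \<longrightarrow>
       (in_graph_closure_A M g f \<longleftrightarrow> dom_Amax M g \<and> (AE x in M. f x = pseries g x))"
    using fwd[OF assms(1)] bwd[OF assms] by blast
qed

end
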